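(* Let $y_n\in\mathbb{R}^2$, $\rho_n>0$ be sequences and $M\in\mathbb{N}$. Let $\omega_\infty\in\mathbb{S}^2$ be a constant, $\omega_1,\dots,\omega_M$ non-constant harmonic maps, and $b_{n,j}\in D(y_n,\rho_n)$, $\mu_{n,j}\in(0,\infty)$ for $j\in\{1,\dots,M\}$ sequences such that $$\lim_{n\to\infty}\Big[\sum_{j\ne k}\Big(\frac{\mu_{n,j}}{\mu_{n,k}}+\frac{\mu_{n,k}}{\mu_{n,j}}+\frac{|b_{n,j}-b_{n,k}|}{\mu_{n,j}}\Big)^{-1}+\sum_{j=1}^M\frac{\mu_{n,j}}{\operatorname{dist}(b_{n,j},\partial D(y_n,\rho_n))}\Big]=0.$$ Then $$\lim_{n\to\infty}E\Big(\omega_\infty+\sum_{j=1}^M\Big(\omega_j\Big(\frac{\cdot-b_{n,j}}{\mu_{n,j}}\Big)-\omega_j(\infty)\Big);D(y_n,\rho_n)\Big)=\sum_{j=1}^ME(\omega_j).$$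
   Context: $D(y,\rho)$ is the open disc of radius $\rho$ centered at $y$; for $v:\mathbb{R}^2\to\mathbb{R}^3$, $E(v;\Omega):=\frac12\int_\Omega|\nabla v|^2$, $E(v)=E(v;\mathbb{R}^2)$. A harmonic map is a finite-energy map $\omega:\mathbb{R}^2\to\mathbb{S}^2$ solving $\Delta\omega+\omega|\nabla\omega|^2=0$; for non-constant ones $\omega(\infty):=\lim_{|x|\to\infty}\omega(x)\in\mathbb{S}^2$ exists. *)

theory Defs
  imports "HOL-Analysis.Analysis"
begin

definition pd :: "2 \<Rightarrow> (real^2 \<Rightarrow> real^3) \<Rightarrow> real^2 \<Rightarrow> real^3" where
  "pd i f = (\<lambda>x. frechet_derivative f (at x) (axis i 1))"

definition grad_sq :: "(real^2 \<Rightarrow> real^3) \<Rightarrow> real^2 \<Rightarrow> real" where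
  "grad_sq f x = (\<Sum>i\<in>UNIV. (norm (pd i f x))^2)"

definition laplacian :: "(real^2 \<Rightarrow> real^3) \<Rightarrow> real^2 \<Rightarrow> real^3" where
  "laplacian f x = (\<Sum>i\<in>UNIV. pd i (pd i f) x)"

definition energy :: "(real^2 \<Rightarrow> real^3) \<Rightarrow> (real^2) set \<Rightarrow> real" where
  "energy f \<Omega> = (1/2) * integral \<Omega> (grad_sq f)"

definition harmonic_map :: "(real^2 \<Rightarrow> real^3) \<Rightarrow> bool" where
  "harmonic_map w \<longleftrightarrow>
     (\<forall>x. norm (w x) = 1) \<and>
     (\<forall>x. w differentiable (at x)) \<and>
     (\<forall>i x. pd i w differentiable (at x)) \<and>
     (\<forall>x. laplacian w x + grad_sq w x *\<^sub>R w x = 0) \<and>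
     grad_sq w integrable_on UNIV"

definition value_at_infinity :: "(real^2 \<Rightarrow> real^3) \<Rightarrow> real^3" where
  "value_at_infinity w = Lim at_infinity w"

end

theory Submission imports Defs begin

lemma cov_UNIV:
  fixes f :: "real^2 \<Rightarrow> real" and b :: "real^2"
  assumes f: "f absolutely_integrable_on UNIV" and mu: "\<mu> > 0"
  shows "((\<lambda>x. f ((1/\<mu>) *\<^sub>R (x - b))) has_integral (\<mu>^2 * integral UNIV f)) UNIV"
proof -
  define T where "T = (\<lambda>x::real^2. (-(1/\<mu>) *\<^sub>R b) + (\<Sum>j\<in>Basis. ((1/\<mu>) * (x \<bullet> j)) *\<^sub>R j))"
  have T: "T x = (1/\<mu>) *\<^sub>R (x - b)" for x
  proof -
    have "(\<Sum>j\<in>Basis. ((1/\<mu>) * (x \<bullet> j)) *\<^sub>R j) = (1/\<mu>) *\<^sub>R (\<Sum>j\<in>Basis. (x \<bullet> j) *\<^sub>R j)"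
      by (simp add: scaleR_sum_right)
    also have "\<dots> = (1/\<mu>) *\<^sub>R x" by (simp add: euclidean_representation)
    finally show ?thesis unfolding T_def by (simp add: algebra_simps)
  qed
  have leb: "lebesgue = density (distr lebesgue lebesgue T) (\<lambda>_. (\<Prod>j\<in>(Basis::(real^2) set). \<bar>1/\<mu>\<bar>))"
    and Tm: "T \<in> lebesgue \<rightarrow>\<^sub>M lebesgue"
    using lebesgue_affine_euclidean[of "\<lambda>_. 1/\<mu>" "-(1/\<mu>) *\<^sub>R b", folded T_def]
      lebesgue_affine_measurable[of "\<lambda>_. 1/\<mu>" "-(1/\<mu>) *\<^sub>R b", folded T_def] mu by auto
  have pr: "(\<Prod>j\<in>(Basis::(real^2) set). \<bar>1/\<mu>\<bar>) = (1/\<mu>)^2"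
    using mu by (simp add: prod_constant)
  have fi: "integrable lebesgue f" using f by (simp add: set_integrable_def)
  have fm: "f \<in> borel_measurable lebesgue" using fi by (rule borel_measurable_integrable)
  have "integrable (density (distr lebesgue lebesgue T) (\<lambda>_. ennreal ((1/\<mu>)^2))) f"
    using fi leb pr by simp
  then have "integrable (distr lebesgue lebesgue T) (\<lambda>x. (1/\<mu>)^2 *\<^sub>R f x)"
    using mu fm by (subst (asm) integrable_density) auto
  then have "integrable (distr lebesgue lebesgue T) f"
    using mu by (simp add: integrable_mult_right_iff) 
  then have ci: "integrable lebesgue (\<lambda>x. f (T x))"
    using Tm fm by (simp add: integrable_distr_eq)
  have "integral\<^sup>L lebesgue f = integral\<^sup>L (density (distr lebesgue lebesgue T) (\<lambda>_. ennreal ((1/\<mu>)^2))) f"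
    using leb pr by simp
  also have "\<dots> = (1/\<mu>)^2 * integral\<^sup>L (distr lebesgue lebesgue T) f"
    using mu fm by (subst integral_density) auto
  also have "\<dots> = (1/\<mu>)^2 * integral\<^sup>L lebesgue (\<lambda>x. f (T x))"
    using Tm fm by (simp add: integral_distr)
  finally have eq: "integral\<^sup>L lebesgue (\<lambda>x. f (T x)) = \<mu>^2 * integral\<^sup>L lebesgue f"
    using mu by (simp add: field_simps)
  have "((\<lambda>x. f (T x)) has_integral (integral\<^sup>L lebesgue (\<lambda>x. f (T x)))) UNIV"
    using ci by (rule has_integral_integral_lebesgue)
  moreover have "integral UNIV f = integral\<^sup>L lebesgue f" using fi by (rule integral_lebesgue)
  ultimately show ?thesis using eq T by simp
qed


lemma L_int:
  fixes f H :: "real^2 \<Rightarrow> real"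
  assumes f: "continuous_on UNIV f" and H: "H integrable_on UNIV"
    and le: "\<And>x. \<bar>f x\<bar> \<le> H x" and S: "S \<in> sets lebesgue"
  shows "f integrable_on S"
proof -
  have "f \<in> borel_measurable (lebesgue_on S)"
    using continuous_imp_measurable_on_sets_lebesgue[OF continuous_on_subset[OF f] S] by simp
  then have "(\<lambda>x. if x \<in> S then f x else 0) \<in> borel_measurable (lebesgue_on UNIV)"
    using borel_measurable_if_I[OF _ S] by (simp add: lebesgue_on_UNIV_eq)
  then have "(\<lambda>x. if x \<in> S then f x else 0) integrable_on UNIV"
  proof (rule measurable_bounded_by_integrable_imp_integrable[OF _ H])
    fix x show "norm (if x \<in> S then f x else 0) \<le> H x"
      using le[of x] abs_ge_zero[of "f x"] by auto
  qed simp
  then show ?thesis by (simp add: integrable_restrict_UNIV)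
qed

lemma cov_set:
  fixes G :: "real^2 \<Rightarrow> real" and b :: "real^2"
  assumes G: "continuous_on UNIV G" "\<And>x. G x \<ge> 0" "G integrable_on UNIV"
    and S: "S \<in> sets lebesgue" and mu: "\<mu> > 0"
  shows "((\<lambda>x. G ((1/\<mu>) *\<^sub>R (x - b)) / \<mu>^2) has_integral integral S G) {x. (1/\<mu>) *\<^sub>R (x - b) \<in> S}"
proof -
  have GS: "G integrable_on S" using L_int[OF G(1) G(3) _ S] G(2) by simp
  let ?GR = "\<lambda>x. if x \<in> S then G x else 0"
  have "?GR integrable_on UNIV" using GS by (simp add: integrable_restrict_UNIV)
  then have "?GR absolutely_integrable_on UNIV"
    by (rule nonnegative_absolutely_integrable_1) (use G(2) in auto)
  from cov_UNIV[OF this mu, of b]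
  have "((\<lambda>x. ?GR ((1/\<mu>) *\<^sub>R (x - b))) has_integral (\<mu>^2 * integral S G)) UNIV"
    by (simp add: integral_restrict_UNIV)
  then have "((\<lambda>x. (1/\<mu>^2) * ?GR ((1/\<mu>) *\<^sub>R (x - b))) has_integral (1/\<mu>^2) * (\<mu>^2 * integral S G)) UNIV"
    by (rule has_integral_mult_right)
  then have "((\<lambda>x. if x \<in> {x. (1/\<mu>) *\<^sub>R (x - b) \<in> S} then G ((1/\<mu>) *\<^sub>R (x - b)) / \<mu>^2 else 0) has_integral integral S G) UNIV"
    using mu by (simp add: if_distrib cong: if_cong)
  then show ?thesis by (subst has_integral_restrict_UNIV[symmetric]) simp
qed

lemma int_split:
  fixes G :: "real^2 \<Rightarrow> real"
  assumes "G integrable_on S" "G integrable_on (UNIV - S)"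
  shows "integral S G + integral (UNIV - S) G = integral UNIV G"
proof -
  have "integral UNIV G = integral UNIV (\<lambda>x. (if x \<in> S then G x else 0) + (if x \<in> UNIV - S then G x else 0))"
    by (rule arg_cong[where f="integral UNIV"]) auto
  also have "\<dots> = integral UNIV (\<lambda>x. (if x \<in> S then G x else 0)) + integral UNIV (\<lambda>x. (if x \<in> UNIV - S then G x else 0))"
    using assms by (subst integral_add) (auto simp only: integrable_restrict_UNIV)
  also have "\<dots> = integral S G + integral (UNIV - S) G"
    by (simp only: integral_restrict_UNIV)
  finally show ?thesis by simp
qed

lemma CS_real:
  fixes X A B :: real
  assumes "A \<ge> 0" "B \<ge> 0" "\<And>t. t > 0 \<Longrightarrow> X \<le> (t * A + B / t) / 2"
  shows "X \<le> sqrt (A * B)"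
proof (cases "A > 0 \<and> B > 0")
  case True
  define t where "t = sqrt B / sqrt A"
  have tp: "t > 0" using True by (simp add: t_def)
  have "X \<le> (t * A + B / t) / 2" using assms(3) tp .
  have sA: "sqrt A * sqrt A = A" and sB: "sqrt B * sqrt B = B" using True by auto
  have pA: "sqrt A > 0" and pB: "sqrt B > 0" using True by auto
  have "t * A = sqrt A * sqrt B"
  proof -
    have "t * A = sqrt B * (sqrt A * sqrt A) / sqrt A" unfolding t_def sA by simp
    also have "\<dots> = sqrt A * sqrt B" using pA by (simp add: field_simps)
    finally show ?thesis .
  qed
  moreover have "B / t = sqrt A * sqrt B"
  proof -
    have "B / t = (sqrt B * sqrt B) * sqrt A / sqrt B" unfolding t_def sB using pA pB by (simp add: field_simps)
    also have "\<dots> = sqrt A * sqrt B" using pB by (simp add: field_simps)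
    finally show ?thesis .
  qed
  ultimately have "X \<le> sqrt A * sqrt B" using \<open>X \<le> (t * A + B / t) / 2\<close> by simp
  then show ?thesis by (simp add: real_sqrt_mult)
next
  case False
  then have AB: "A * B = 0" using assms by auto
  have "X \<le> 0"
  proof (rule ccontr)
    assume "\<not> X \<le> 0"
    then have X: "X > 0" by simp
    show False
    proof (cases "A = 0")
      case True
      have "B / X \<ge> 0" using X assms(2) by simp
      then have pos: "B / X + 1 > 0" by linarith
      have "X \<le> ((B / X + 1) * A + B / (B / X + 1)) / 2" using assms(3)[OF pos] .
      then have "X \<le> (B / (B / X + 1)) / 2" using True by simp
      also have "B / (B / X + 1) < X" using X assms(2)
        by (simp add: field_simps)
      finally show False using X by simp
    next
      case False
      then have B: "B = 0" using AB by simp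
      have Ap: "A > 0" using False assms(1) by simp
      have "X \<le> ((X / (A + 1)) * A) / 2" using assms(3)[of "X / (A + 1)"] B X Ap by simp
      also have "(X / (A + 1)) * A < X" using X Ap by (simp add: field_simps)
      finally show False using X by simp
    qed
  qed
  then show ?thesis using AB by (simp only: AB real_sqrt_zero)
qed

lemma amgm: fixes a c t :: real assumes "a \<ge> 0" "c \<ge> 0" "t > 0"
  shows "sqrt (a * c) \<le> (t * a + c / t) / 2"
proof -
  have "0 \<le> (sqrt (t*a) - sqrt (c/t))^2" by simp
  also have "\<dots> = t*a + c/t - 2 * (sqrt (t*a) * sqrt (c/t))"
    using assms by (simp add: power2_diff)
  also have "sqrt (t*a) * sqrt (c/t) = sqrt (a * c)"
    using assms by (simp add: real_sqrt_mult[symmetric])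
  finally show ?thesis by simp
qed

lemma CS_int:
  fixes f1 f2 :: "real^2 \<Rightarrow> real"
  assumes "f1 integrable_on S" "f2 integrable_on S" "(\<lambda>x. sqrt (f1 x * f2 x)) integrable_on S"
    and "\<And>x. f1 x \<ge> 0" "\<And>x. f2 x \<ge> 0"
  shows "integral S (\<lambda>x. sqrt (f1 x * f2 x)) \<le> sqrt (integral S f1 * integral S f2)"
proof (rule CS_real)
  show "integral S f1 \<ge> 0" "integral S f2 \<ge> 0"
    using assms by (auto intro: integral_nonneg)
  fix t :: real assume t: "t > 0"
  have "integral S (\<lambda>x. sqrt (f1 x * f2 x)) \<le> integral S (\<lambda>x. (t * f1 x + f2 x / t) / 2)"
    using assms t amgm by (intro integral_le) (auto intro!: integrable_divide integrable_add integrable_cmul)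
  also have "\<dots> = (t * integral S f1 + integral S f2 / t) / 2"
  proof -
    have i1: "(\<lambda>x. t * f1 x) integrable_on S" "(\<lambda>x. f2 x / t) integrable_on S"
      using assms(1,2) t by (auto intro: integrable_on_mult_right)
    have "integral S (\<lambda>x. t * f1 x + f2 x / t) = integral S (\<lambda>x. t * f1 x) + integral S (\<lambda>x. f2 x / t)"
      using i1 by (rule integral_add)
    then show ?thesis by simp
  qed
  finally show "integral S (\<lambda>x. sqrt (f1 x * f2 x)) \<le> (t * integral S f1 + integral S f2 / t) / 2" .
qed


lemma tail:
  fixes G :: "real^2 \<Rightarrow> real"
  assumes G: "continuous_on UNIV G" "\<And>x. G x \<ge> 0" "G integrable_on UNIV" and e: "\<epsilon> > 0"
  shows "\<exists>R>0. \<forall>S\<in>sets lebesgue. S \<inter> ball 0 R = {} \<longrightarrow> integral S G \<le> \<epsilon>"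
proof -
  define f where "f m x = (if x \<in> UNIV - ball 0 (real m) then G x else 0)" for m :: nat and x
  have Gi: "G integrable_on S" if "S \<in> sets lebesgue" for S
    using L_int[OF G(1) G(3) _ that] G(2) by simp
  have mb: "UNIV - ball (0::real^2) r \<in> sets lebesgue" for r
    by (intro sets.Diff) auto
  have fi: "f m integrable_on UNIV" for m
    unfolding f_def integrable_restrict_UNIV using Gi[OF mb] .
  have lim: "(\<lambda>m. integral UNIV (f m)) \<longlonglongrightarrow> integral UNIV (\<lambda>x::real^2. 0::real)"
  proof (rule Equivalence_Lebesgue_Henstock_Integration.dominated_convergence(2)[OF fi G(3)])
    show "norm (f m x) \<le> G x" for m x using G(2)[of x] by (simp add: f_def)
    show "(\<lambda>m. f m x) \<longlonglongrightarrow> 0" for x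
    proof (rule tendsto_eventually)
      obtain N :: nat where "norm x < real N" using reals_Archimedean2 by blast
      then show "\<forall>\<^sub>F m in sequentially. f m x = 0"
        unfolding eventually_sequentially f_def
        by (intro exI[of _ N]) (auto simp: dist_norm)
    qed
  qed
  then have "\<forall>\<^sub>F m in sequentially. integral UNIV (f m) < \<epsilon>"
    using order_tendstoD(2)[OF lim, of \<epsilon>] e by simp
  then obtain N where N: "\<And>m. m \<ge> N \<Longrightarrow> integral UNIV (f m) < \<epsilon>"
    unfolding eventually_sequentially by blast
  define m where "m = Suc N"
  have "integral UNIV (f m) < \<epsilon>" using N m_def by simp
  then have tl: "integral (UNIV - ball 0 (real m)) G < \<epsilon>"
    unfolding f_def integral_restrict_UNIV .
  show ?thesis
  proof (intro exI[of _ "real m"] conjI ballI impI)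
    show "real m > 0" by (simp add: m_def)
    fix S :: "(real^2) set" assume S: "S \<in> sets lebesgue" "S \<inter> ball 0 (real m) = {}"
    have "integral S G \<le> integral (UNIV - ball 0 (real m)) G"
      using S by (intro integral_subset_le Gi mb) (auto simp: G(2))
    then show "integral S G \<le> \<epsilon>" using tl by simp
  qed
qed

lemma smallball:
  fixes G :: "real^2 \<Rightarrow> real"
  assumes G: "continuous_on UNIV G" "\<And>x. G x \<ge> 0" "G integrable_on UNIV"
    and T: "\<forall>S\<in>sets lebesgue. S \<inter> ball 0 R = {} \<longrightarrow> integral S G \<le> \<epsilon>"
  shows "\<exists>K\<ge>0. \<forall>c r. r \<ge> 0 \<longrightarrow> integral (ball c r) G \<le> \<epsilon> + K * r^2"
proof -
  have Gi: "G integrable_on S" if "S \<in> sets lebesgue" for S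
    using L_int[OF G(1) G(3) _ that] G(2) by simp
  have "compact (G ` cball 0 R)"
    by (intro compact_continuous_image continuous_on_subset[OF G(1)]) auto
  then obtain K0 where K0: "\<forall>y\<in>G ` cball 0 R. norm y \<le> K0"
    using compact_imp_bounded[of "G ` cball 0 R"] unfolding bounded_iff by blast
  define K where "K = max K0 0"
  have K: "\<And>x::real^2. x \<in> cball 0 R \<Longrightarrow> G x \<le> K" "K \<ge> 0"
  proof -
    fix x :: "real^2" assume "x \<in> cball 0 R"
    then have "norm (G x) \<le> K0" using K0 by blast
    then show "G x \<le> K" unfolding K_def by simp
  qed (simp add: K_def)
  show ?thesis
  proof (intro exI[of _ "K * pi"] conjI allI impI)
    show "K * pi \<ge> 0" using K(2) by simp
    fix c :: "real^2" and r :: real assume r: "r \<ge> 0"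
    let ?B = "ball c r"
    have Bs: "?B \<inter> cball 0 R \<in> sets lebesgue" "?B - cball 0 R \<in> sets lebesgue" by auto
    have e0: "integral ?B G = integral ?B (\<lambda>x. (if x \<in> ?B \<inter> cball 0 R then G x else 0) + (if x \<in> ?B - cball 0 R then G x else 0))"
      by (rule integral_cong) auto
    also have "\<dots> = integral ?B (\<lambda>x. if x \<in> ?B \<inter> cball 0 R then G x else 0) + integral ?B (\<lambda>x. if x \<in> ?B - cball 0 R then G x else 0)"
    proof (rule integral_add)
      have "(?B \<inter> cball 0 R) \<inter> ?B = ?B \<inter> cball 0 R" by blast
      then show "(\<lambda>x. if x \<in> ?B \<inter> cball 0 R then G x else 0) integrable_on ?B"
        using Gi[OF Bs(1)] by (simp only: integrable_restrict_Int)
      have "(?B - cball 0 R) \<inter> ?B = ?B - cball 0 R" by blast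
      then show "(\<lambda>x. if x \<in> ?B - cball 0 R then G x else 0) integrable_on ?B"
        using Gi[OF Bs(2)] by (simp only: integrable_restrict_Int)
    qed
    finally have e1: "integral ?B G = integral ?B (\<lambda>x. if x \<in> ?B \<inter> cball 0 R then G x else 0) + integral ?B (\<lambda>x. if x \<in> ?B - cball 0 R then G x else 0)" .
    have e2: "integral ?B (\<lambda>x. if x \<in> ?B - cball 0 R then G x else 0) = integral (?B - cball 0 R) G"
    proof -
      have "(?B - cball 0 R) \<inter> ?B = ?B - cball 0 R" by blast
      then show ?thesis by (simp only: integral_restrict_Int)
    qed
    have e3: "integral (?B - cball 0 R) G \<le> \<epsilon>"
    proof -
      have "(?B - cball 0 R) \<inter> ball 0 R = {}" by auto
      then show ?thesis using T Bs(2) by blast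
    qed
    have e4: "integral ?B (\<lambda>x. if x \<in> ?B \<inter> cball 0 R then G x else 0) \<le> integral ?B (\<lambda>x. K)"
    proof (rule integral_le)
      have "(?B \<inter> cball 0 R) \<inter> ?B = ?B \<inter> cball 0 R" by blast
      then show "(\<lambda>x. if x \<in> ?B \<inter> cball 0 R then G x else 0) integrable_on ?B"
        using Gi[OF Bs(1)] by (simp only: integrable_restrict_Int)
      show "(\<lambda>x. K) integrable_on ?B"
        by (rule integrable_on_const) simp
      show "\<And>x. x \<in> ?B \<Longrightarrow> (if x \<in> ?B \<inter> cball 0 R then G x else 0) \<le> K"
        using K by auto
    qed
    have e5: "integral ?B (\<lambda>x. K) = K * measure lebesgue ?B"
    proof -
      have "(\<lambda>x::real^2. 1::real) integrable_on ?B" by (rule integrable_on_const) simp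
      then have "K * integral ?B (\<lambda>x. 1) = integral ?B (\<lambda>x. K * 1)" by (rule integral_mult)
      then show ?thesis using lmeasure_integral[of ?B] by simp
    qed
    have e6: "measure lebesgue ?B = r^2 * pi"
      using circle_area[OF r, of c] by simp
    have e7: "integral ?B (\<lambda>x. K) = K * pi * r^2" using e5 e6 by simp
    show "integral ?B G \<le> \<epsilon> + K * pi * r^2" using e1 e2 e3 e4 e7 by linarith
  qed
qed


definition hs :: "(real^2 \<Rightarrow> real) \<Rightarrow> real \<Rightarrow> real^2 \<Rightarrow> real^2 \<Rightarrow> real" where
  "hs G \<mu> b x = G ((1/\<mu>) *\<^sub>R (x - b)) / \<mu>^2"

definition gprop :: "(real^2 \<Rightarrow> real) \<Rightarrow> bool" where
  "gprop G \<longleftrightarrow> continuous_on UNIV G \<and> (\<forall>x. G x \<ge> 0) \<and> G integrable_on UNIV"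

lemma gpropD: assumes "gprop G" shows "continuous_on UNIV G" "\<And>x. G x \<ge> 0" "G integrable_on UNIV"
  using assms by (auto simp: gprop_def)

lemma gprop_int: assumes "gprop G" "S \<in> sets lebesgue" shows "G integrable_on S"
  using L_int[OF gpropD(1,3)[OF assms(1)] _ assms(2)] gpropD(2)[OF assms(1)] by simp

lemma hs_gprop: assumes G: "gprop G" and mu: "\<mu> > 0" shows "gprop (hs G \<mu> b)"
proof -
  have c: "continuous_on UNIV (hs G \<mu> b)" unfolding hs_def using mu
    by (intro continuous_intros continuous_on_compose2[OF gpropD(1)[OF G]]) auto
  have "(hs G \<mu> b has_integral integral UNIV G) {x. (1/\<mu>) *\<^sub>R (x - b) \<in> UNIV}"
    unfolding hs_def by (rule cov_set[OF gpropD[OF G] _ mu]) auto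
  then have "hs G \<mu> b integrable_on UNIV" by auto
  then show ?thesis using c gpropD(2)[OF G] mu unfolding gprop_def hs_def by auto
qed

lemma hs_int: assumes G: "gprop G" and mu: "\<mu> > 0" and S: "S \<in> sets lebesgue"
  shows "integral {x. (1/\<mu>) *\<^sub>R (x - b) \<in> S} (hs G \<mu> b) = integral S G"
  unfolding hs_def using cov_set[OF gpropD[OF G] S mu] by (rule integral_unique)

lemma hs_UNIV: assumes G: "gprop G" and mu: "\<mu> > 0"
  shows "integral UNIV (hs G \<mu> b) = integral UNIV G"
  using hs_int[OF G mu, of UNIV b] by simp

lemma preimage_ball:
  fixes b c :: "real^2" assumes mu: "\<mu> > 0"
  shows "{x. (1/\<mu>) *\<^sub>R (x - b) \<in> ball c r} = ball (b + \<mu> *\<^sub>R c) (\<mu> * r)"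
proof -
  have "dist c ((1/\<mu>) *\<^sub>R (x - b)) = dist (b + \<mu> *\<^sub>R c) x / \<mu>" for x
  proof -
    have "c - (1/\<mu>) *\<^sub>R (x - b) = (1/\<mu>) *\<^sub>R ((b + \<mu> *\<^sub>R c) - x)"
      using mu by (simp add: algebra_simps)
    then show ?thesis using mu by (simp add: dist_norm)
  qed
  then show ?thesis using mu by (auto simp: pos_divide_less_eq mult.commute)
qed

lemma preimage_compl:
  "{x. (1/\<mu>) *\<^sub>R (x - b) \<in> UNIV - S} = UNIV - {x. (1/\<mu>) *\<^sub>R (x - b) \<in> S}"
  by auto

lemma int_mono_sub: assumes "gprop G" "S \<in> sets lebesgue"
  shows "integral S G \<le> integral UNIV G"
  using assms by (intro integral_subset_le gprop_int) (auto dest: gpropD)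

lemma int_nonneg: assumes "gprop G" shows "integral S G \<ge> 0"
  using assms by (cases "G integrable_on S") (auto intro: integral_nonneg dest: gpropD simp: not_integrable_integral)

lemma sqrt_gprop:
  assumes G1: "gprop G1" and G2: "gprop G2"
  shows "gprop (\<lambda>x. sqrt (G1 x * G2 x))"
proof -
  have c: "continuous_on UNIV (\<lambda>x. sqrt (G1 x * G2 x))"
    by (intro continuous_intros gpropD[OF G1] gpropD[OF G2])
  have le: "\<bar>sqrt (G1 x * G2 x)\<bar> \<le> G1 x + G2 x" for x
  proof -
    have "sqrt (G1 x * G2 x) \<le> (1 * G1 x + G2 x / 1) / 2"
      by (rule amgm) (auto intro: gpropD[OF G1] gpropD[OF G2])
    then show ?thesis using gpropD(2)[OF G1, of x] gpropD(2)[OF G2, of x] by auto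
  qed
  have "(\<lambda>x. sqrt (G1 x * G2 x)) integrable_on UNIV"
    by (rule L_int[OF c _ le]) (auto intro: integrable_add gpropD[OF G1] gpropD[OF G2])
  then show ?thesis using c gpropD(2)[OF G1] gpropD(2)[OF G2] unfolding gprop_def by simp
qed

lemma cross_bound:
  assumes G1: "gprop G1" and G2: "gprop G2" and m1: "\<mu>1 > 0" and m2: "\<mu>2 > 0" and R: "R > 0"
  shows "integral UNIV (\<lambda>x. sqrt (hs G1 \<mu>1 b1 x * hs G2 \<mu>2 b2 x))
     \<le> sqrt (integral UNIV G1 * integral (ball ((1/\<mu>2) *\<^sub>R (b1 - b2)) (R * \<mu>1 / \<mu>2)) G2)
       + sqrt (integral (UNIV - ball 0 R) G1 * integral UNIV G2)"
proof -
  let ?h1 = "hs G1 \<mu>1 b1" and ?h2 = "hs G2 \<mu>2 b2"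
  let ?s = "\<lambda>x. sqrt (?h1 x * ?h2 x)"
  define B where "B = ball b1 (\<mu>1 * R)"
  have h1: "gprop ?h1" and h2: "gprop ?h2" using hs_gprop G1 G2 m1 m2 by auto
  have s: "gprop ?s" by (rule sqrt_gprop[OF h1 h2])
  have Bm: "B \<in> sets lebesgue" "UNIV - B \<in> sets lebesgue" unfolding B_def by auto
  have split: "integral UNIV ?s = integral B ?s + integral (UNIV - B) ?s"
    using int_split[OF gprop_int[OF s Bm(1)] gprop_int[OF s Bm(2)]] by simp
  have CS1: "integral B ?s \<le> sqrt (integral B ?h1 * integral B ?h2)"
    by (rule CS_int) (auto intro: gprop_int[OF _ Bm(1)] h1 h2 s gpropD(2)[OF h1] gpropD(2)[OF h2])
  have CS2: "integral (UNIV - B) ?s \<le> sqrt (integral (UNIV - B) ?h1 * integral (UNIV - B) ?h2)"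
    by (rule CS_int) (auto intro: gprop_int[OF _ Bm(2)] h1 h2 s gpropD(2)[OF h1] gpropD(2)[OF h2])
  have pb2: "{x. (1/\<mu>2) *\<^sub>R (x - b2) \<in> ball ((1/\<mu>2) *\<^sub>R (b1 - b2)) (R * \<mu>1 / \<mu>2)} = B"
    unfolding preimage_ball[OF m2] B_def using m2 by (simp add: algebra_simps)
  have I2: "integral B ?h2 = integral (ball ((1/\<mu>2) *\<^sub>R (b1 - b2)) (R * \<mu>1 / \<mu>2)) G2"
    using hs_int[OF G2 m2, of "ball ((1/\<mu>2) *\<^sub>R (b1 - b2)) (R * \<mu>1 / \<mu>2)" b2] pb2 by simp
  have pb1: "{x. (1/\<mu>1) *\<^sub>R (x - b1) \<in> UNIV - ball 0 R} = UNIV - B"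
    unfolding preimage_compl preimage_ball[OF m1] B_def by simp
  have I1: "integral (UNIV - B) ?h1 = integral (UNIV - ball 0 R) G1"
    using hs_int[OF G1 m1, of "UNIV - ball 0 R" b1] pb1 by auto
  have a1: "integral B ?h1 \<le> integral UNIV G1"
    using int_mono_sub[OF h1 Bm(1)] hs_UNIV[OF G1 m1] by simp
  have a2: "integral (UNIV - B) ?h2 \<le> integral UNIV G2"
    using int_mono_sub[OF h2 Bm(2)] hs_UNIV[OF G2 m2] by simp
  have "sqrt (integral B ?h1 * integral B ?h2) \<le> sqrt (integral UNIV G1 * integral (ball ((1/\<mu>2) *\<^sub>R (b1 - b2)) (R * \<mu>1 / \<mu>2)) G2)"
    unfolding I2[symmetric] by (intro real_sqrt_le_mono mult_right_mono a1 int_nonneg h2)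
  moreover have "sqrt (integral (UNIV - B) ?h1 * integral (UNIV - B) ?h2) \<le> sqrt (integral (UNIV - ball 0 R) G1 * integral UNIV G2)"
    unfolding I1[symmetric] by (intro real_sqrt_le_mono mult_left_mono a2 int_nonneg h1)
  ultimately show ?thesis using split CS1 CS2 by linarith
qed

lemma tail2:
  assumes "gprop G1" "gprop G2" "\<epsilon> > 0"
  shows "\<exists>R>0. \<forall>S\<in>sets lebesgue. S \<inter> ball 0 R = {} \<longrightarrow> integral S G1 \<le> \<epsilon> \<and> integral S G2 \<le> \<epsilon>"
proof -
  obtain R1 where R1: "R1 > 0" "\<forall>S\<in>sets lebesgue. S \<inter> ball 0 R1 = {} \<longrightarrow> integral S G1 \<le> \<epsilon>"
    using tail[OF gpropD[OF assms(1)] assms(3)] by blast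
  obtain R2 where R2: "R2 > 0" "\<forall>S\<in>sets lebesgue. S \<inter> ball 0 R2 = {} \<longrightarrow> integral S G2 \<le> \<epsilon>"
    using tail[OF gpropD[OF assms(2)] assms(3)] by blast
  show ?thesis
  proof (intro exI[of _ "max R1 R2"] conjI ballI impI)
    show "max R1 R2 > 0" using R1 by simp
    fix S :: "(real^2) set" assume S: "S \<in> sets lebesgue" "S \<inter> ball 0 (max R1 R2) = {}"
    have "S \<inter> ball 0 R1 = {}" "S \<inter> ball 0 R2 = {}" using S(2) by auto
    then show "integral S G1 \<le> \<epsilon>" "integral S G2 \<le> \<epsilon>" using R1 R2 S(1) by auto
  qed
qed

lemma tendsto_small:
  fixes X :: "nat \<Rightarrow> real"
  assumes "\<And>n. X n \<ge> 0" "\<And>e. e > 0 \<Longrightarrow> eventually (\<lambda>n. X n \<le> e) sequentially"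
  shows "X \<longlonglongrightarrow> 0"
proof (rule order_tendstoI)
  fix a :: real assume a: "a < 0"
  show "eventually (\<lambda>n. a < X n) sequentially"
  proof (rule always_eventually, rule allI)
    fix n show "a < X n" using a assms(1)[of n] by linarith
  qed
next
  fix a :: real assume a: "0 < a"
  have "eventually (\<lambda>n. X n \<le> a/2) sequentially" using assms(2)[of "a/2"] a by simp
  then show "eventually (\<lambda>n. X n < a) sequentially"
    by (rule eventually_mono) (use a in simp)
qed

lemma sqrt_small:
  fixes e Em \<epsilon> :: real
  assumes e: "e > 0" and Em: "Em > 0" and eps: "\<epsilon> = e^2 / (16 * Em)"
  shows "sqrt (Em * (2 * \<epsilon>)) \<le> e / 2"
proof -
  have "Em * (2 * \<epsilon>) = (e/2)^2 / 2" using Em unfolding eps by (simp add: field_simps power2_eq_square)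
  also have "\<dots> \<le> (e/2)^2" by simp
  finally have "sqrt (Em * (2 * \<epsilon>)) \<le> sqrt ((e/2)^2)" by (rule real_sqrt_le_mono)
  then show ?thesis using e by simp
qed

lemma cross_to_zero:
  fixes \<mu>1 \<mu>2 :: "nat \<Rightarrow> real" and b1 b2 :: "nat \<Rightarrow> real^2"
  assumes G1: "gprop G1" and G2: "gprop G2" and m1: "\<And>n. \<mu>1 n > 0" and m2: "\<And>n. \<mu>2 n > 0"
    and Q: "\<And>C. eventually (\<lambda>n. \<mu>1 n / \<mu>2 n + \<mu>2 n / \<mu>1 n + norm (b1 n - b2 n) / \<mu>1 n \<ge> C) sequentially"
  shows "(\<lambda>n. integral UNIV (\<lambda>x. sqrt (hs G1 (\<mu>1 n) (b1 n) x * hs G2 (\<mu>2 n) (b2 n) x))) \<longlonglongrightarrow> 0"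
proof (rule tendsto_small)
  fix n show "integral UNIV (\<lambda>x. sqrt (hs G1 (\<mu>1 n) (b1 n) x * hs G2 (\<mu>2 n) (b2 n) x)) \<ge> 0"
    by (rule int_nonneg[OF sqrt_gprop[OF hs_gprop[OF G1 m1] hs_gprop[OF G2 m2]]])
next
  fix e :: real assume e: "e > 0"
  define E1 where "E1 = integral UNIV G1"
  define E2 where "E2 = integral UNIV G2"
  have E1: "E1 \<ge> 0" and E2: "E2 \<ge> 0" unfolding E1_def E2_def using int_nonneg G1 G2 by auto
  define Em where "Em = E1 + E2 + 1"
  have Em: "Em > 0" "E1 \<le> Em" "E2 \<le> Em" using E1 E2 by (auto simp: Em_def)
  define \<epsilon> where "\<epsilon> = e^2 / (16 * Em)"
  have eps: "\<epsilon> > 0" using e Em by (simp add: \<epsilon>_def)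
  have key: "sqrt (Em * (2 * \<epsilon>)) \<le> e / 2" by (rule sqrt_small[OF e Em(1) \<epsilon>_def])
  have fin: "sqrt (E * I) + sqrt (T * E') \<le> e"
    if "0 \<le> E" "E \<le> Em" "0 \<le> E'" "E' \<le> Em" "0 \<le> I" "I \<le> 2 * \<epsilon>" "0 \<le> T" "T \<le> 2 * \<epsilon>" for E E' I T
  proof -
    have "sqrt (E * I) \<le> sqrt (Em * (2 * \<epsilon>))" using that by (intro real_sqrt_le_mono mult_mono) auto
    moreover have "sqrt (T * E') \<le> sqrt (Em * (2 * \<epsilon>))" using that by (intro real_sqrt_le_mono) (simp add: mult.commute mult_mono)
    ultimately show ?thesis using key by linarith
  qed
  obtain R where R: "R > 0" "\<forall>S\<in>sets lebesgue. S \<inter> ball 0 R = {} \<longrightarrow> integral S G1 \<le> \<epsilon> \<and> integral S G2 \<le> \<epsilon>"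
    using tail2[OF G1 G2 eps] by blast
  have T1: "\<forall>S\<in>sets lebesgue. S \<inter> ball 0 R = {} \<longrightarrow> integral S G1 \<le> \<epsilon>"
   and T2: "\<forall>S\<in>sets lebesgue. S \<inter> ball 0 R = {} \<longrightarrow> integral S G2 \<le> \<epsilon>" using R(2) by auto
  obtain K1 where K1: "K1 \<ge> 0" "\<forall>c r. r \<ge> 0 \<longrightarrow> integral (ball c r) G1 \<le> \<epsilon> + K1 * r^2"
    using smallball[OF gpropD[OF G1] T1] by blast
  obtain K2 where K2: "K2 \<ge> 0" "\<forall>c r. r \<ge> 0 \<longrightarrow> integral (ball c r) G2 \<le> \<epsilon> + K2 * r^2"
    using smallball[OF gpropD[OF G2] T2] by blast
  define K where "K = K1 + K2 + 1"
  have K: "K > 0" "K1 \<le> K" "K2 \<le> K" using K1 K2 by (auto simp: K_def)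
  define \<delta> where "\<delta> = min 1 (\<epsilon> / (K * R^2))"
  have dpos: "\<delta> > 0" "\<delta> \<le> 1" using eps K R by (auto simp: \<delta>_def)
  have dK: "K * (R * lam)^2 \<le> \<epsilon>" if "0 \<le> lam" "lam \<le> \<delta>" for lam
  proof -
    have "lam \<le> 1" "lam \<le> \<epsilon> / (K * R^2)" using that dpos by (auto simp: \<delta>_def)
    then have "lam^2 \<le> lam" using that by (simp add: power2_eq_square mult_left_le)
    also have "lam * (K * R^2) \<le> \<epsilon>" using \<open>lam \<le> \<epsilon> / (K * R^2)\<close> K R by (simp add: pos_le_divide_eq)
    ultimately have "lam^2 * (K * R^2) \<le> \<epsilon>" using K R
      by (meson mult_right_mono order_trans zero_le_power2 mult_nonneg_nonneg less_imp_le)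
    then show ?thesis by (simp add: power_mult_distrib algebra_simps)
  qed
  have small1: "integral (ball c (R * lam)) G1 \<le> 2 * \<epsilon>" if "0 \<le> lam" "lam \<le> \<delta>" for c lam
  proof -
    have "integral (ball c (R * lam)) G1 \<le> \<epsilon> + K1 * (R * lam)^2" using K1(2) R that by simp
    also have "K1 * (R * lam)^2 \<le> K * (R * lam)^2" using K by (intro mult_right_mono) auto
    finally show ?thesis using dK[OF that] by linarith
  qed
  have small2: "integral (ball c (R * lam)) G2 \<le> 2 * \<epsilon>" if "0 \<le> lam" "lam \<le> \<delta>" for c lam
  proof -
    have "integral (ball c (R * lam)) G2 \<le> \<epsilon> + K2 * (R * lam)^2" using K2(2) R that by simp
    also have "K2 * (R * lam)^2 \<le> K * (R * lam)^2" using K by (intro mult_right_mono) auto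
    finally show ?thesis using dK[OF that] by linarith
  qed
  have UB: "UNIV - ball 0 R \<in> sets lebesgue" "(UNIV - ball 0 R) \<inter> ball 0 R = {}" by auto
  have "integral (UNIV - ball 0 R) G1 \<le> \<epsilon>" using T1 UB by blast
  then have tl1: "integral (UNIV - ball 0 R) G1 \<le> 2 * \<epsilon>" using eps by linarith
  have "integral (UNIV - ball 0 R) G2 \<le> \<epsilon>" using T2 UB by blast
  then have tl2: "integral (UNIV - ball 0 R) G2 \<le> 2 * \<epsilon>" using eps by linarith
  show "eventually (\<lambda>n. integral UNIV (\<lambda>x. sqrt (hs G1 (\<mu>1 n) (b1 n) x * hs G2 (\<mu>2 n) (b2 n) x)) \<le> e) sequentially"
    using Q[of "2 / \<delta> + R + R / \<delta>"]
  proof (rule eventually_mono)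
    fix n assume Qn: "2 / \<delta> + R + R / \<delta> \<le> \<mu>1 n / \<mu>2 n + \<mu>2 n / \<mu>1 n + norm (b1 n - b2 n) / \<mu>1 n"
    let ?X = "integral UNIV (\<lambda>x. sqrt (hs G1 (\<mu>1 n) (b1 n) x * hs G2 (\<mu>2 n) (b2 n) x))"
    have m1n: "\<mu>1 n > 0" and m2n: "\<mu>2 n > 0" using m1 m2 by auto
    have CB1: "?X \<le> sqrt (E1 * integral (ball ((1/\<mu>2 n) *\<^sub>R (b1 n - b2 n)) (R * \<mu>1 n / \<mu>2 n)) G2)
       + sqrt (integral (UNIV - ball 0 R) G1 * E2)"
      unfolding E1_def E2_def by (rule cross_bound[OF G1 G2 m1n m2n R(1)])
    have "?X = integral UNIV (\<lambda>x. sqrt (hs G2 (\<mu>2 n) (b2 n) x * hs G1 (\<mu>1 n) (b1 n) x))"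
      by (simp add: mult.commute)
    also have "\<dots> \<le> sqrt (E2 * integral (ball ((1/\<mu>1 n) *\<^sub>R (b2 n - b1 n)) (R * \<mu>2 n / \<mu>1 n)) G1)
       + sqrt (integral (UNIV - ball 0 R) G2 * E1)"
      unfolding E1_def E2_def by (rule cross_bound[OF G2 G1 m2n m1n R(1)])
    finally have CB2: "?X \<le> sqrt (E2 * integral (ball ((1/\<mu>1 n) *\<^sub>R (b2 n - b1 n)) (R * \<mu>2 n / \<mu>1 n)) G1)
       + sqrt (integral (UNIV - ball 0 R) G2 * E1)" .
    have nn1: "0 \<le> integral S G1" and nn2: "0 \<le> integral S G2" for S using int_nonneg G1 G2 by auto
    consider (a) "\<mu>1 n / \<mu>2 n \<le> \<delta>" | (b) "\<mu>2 n / \<mu>1 n \<le> \<delta>" | (c) "\<mu>1 n / \<mu>2 n > \<delta>" "\<mu>2 n / \<mu>1 n > \<delta>"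
      by linarith
    then show "?X \<le> e"
    proof cases
      case a
      have "integral (ball ((1/\<mu>2 n) *\<^sub>R (b1 n - b2 n)) (R * (\<mu>1 n / \<mu>2 n))) G2 \<le> 2 * \<epsilon>"
        using small2[OF _ a] m1n m2n by simp
      then have "sqrt (E1 * integral (ball ((1/\<mu>2 n) *\<^sub>R (b1 n - b2 n)) (R * \<mu>1 n / \<mu>2 n)) G2)
       + sqrt (integral (UNIV - ball 0 R) G1 * E2) \<le> e"
        using tl1 E1 E2 Em nn1 nn2 by (intro fin) auto
      then show ?thesis using CB1 by linarith
    next
      case b
      have "integral (ball ((1/\<mu>1 n) *\<^sub>R (b2 n - b1 n)) (R * (\<mu>2 n / \<mu>1 n))) G1 \<le> 2 * \<epsilon>"
        using small1[OF _ b] m1n m2n by simp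
      then have "sqrt (E2 * integral (ball ((1/\<mu>1 n) *\<^sub>R (b2 n - b1 n)) (R * \<mu>2 n / \<mu>1 n)) G1)
       + sqrt (integral (UNIV - ball 0 R) G2 * E1) \<le> e"
        using tl2 E1 E2 Em nn1 nn2 by (intro fin) auto
      then show ?thesis using CB2 by linarith
    next
      case c
      define lam where "lam = \<mu>1 n / \<mu>2 n"
      define d where "d = norm (b1 n - b2 n)"
      have lpos: "lam > 0" using m1n m2n by (simp add: lam_def)
      have inv: "\<mu>2 n / \<mu>1 n = 1 / lam" by (simp add: lam_def)
      have l1: "lam < 1 / \<delta>" using c(2) dpos lpos unfolding inv by (simp add: field_simps)
      have l2: "1 / lam < 1 / \<delta>" using c(1) dpos lpos unfolding lam_def[symmetric] by (simp add: field_simps)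
      have dd: "d / \<mu>1 n > R + R / \<delta>" using Qn l1 l2 unfolding inv lam_def[symmetric] d_def[symmetric] by linarith
      have n1: "norm ((1/\<mu>2 n) *\<^sub>R (b1 n - b2 n)) = (d / \<mu>1 n) * lam"
        using m1n m2n by (simp add: lam_def d_def)
      have n2: "(d / \<mu>1 n) * lam > (R + R / \<delta>) * lam" using dd lpos by (intro mult_strict_right_mono) auto
      have n3: "(R + R / \<delta>) * lam = R * lam + R * (lam / \<delta>)" by (simp add: algebra_simps)
      have n4: "R * (lam / \<delta>) > R * 1" using c(1) dpos R unfolding lam_def[symmetric] by (intro mult_strict_left_mono) auto
      have far: "norm ((1/\<mu>2 n) *\<^sub>R (b1 n - b2 n)) > R * lam + R" using n1 n2 n3 n4 by linarith
      have disj: "ball ((1/\<mu>2 n) *\<^sub>R (b1 n - b2 n)) (R * lam) \<inter> ball 0 R = {}"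
      proof (rule ccontr)
        assume "\<not> ?thesis"
        then obtain x where x: "dist ((1/\<mu>2 n) *\<^sub>R (b1 n - b2 n)) x < R * lam" "norm x < R" by auto
        have "norm ((1/\<mu>2 n) *\<^sub>R (b1 n - b2 n)) \<le> dist ((1/\<mu>2 n) *\<^sub>R (b1 n - b2 n)) x + norm x"
          by (metis dist_0_norm dist_triangle dist_commute)
        then show False using x far by linarith
      qed
      have "integral (ball ((1/\<mu>2 n) *\<^sub>R (b1 n - b2 n)) (R * lam)) G2 \<le> \<epsilon>"
        using T2 disj by auto
      then have "integral (ball ((1/\<mu>2 n) *\<^sub>R (b1 n - b2 n)) (R * \<mu>1 n / \<mu>2 n)) G2 \<le> 2 * \<epsilon>"
        using eps by (simp add: lam_def)
      then have "sqrt (E1 * integral (ball ((1/\<mu>2 n) *\<^sub>R (b1 n - b2 n)) (R * \<mu>1 n / \<mu>2 n)) G2)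
       + sqrt (integral (UNIV - ball 0 R) G1 * E2) \<le> e"
        using tl1 E1 E2 Em nn1 nn2 by (intro fin) auto
      then show ?thesis using CB1 by linarith
    qed
  qed
qed

lemma pw_bound:
  fixes v :: "'j \<Rightarrow> 2 \<Rightarrow> real^3"
  assumes J: "finite J"
  shows "\<bar>(\<Sum>i\<in>UNIV. (norm (\<Sum>j\<in>J. v j i))^2) - (\<Sum>j\<in>J. \<Sum>i\<in>UNIV. (norm (v j i))^2)\<bar>
     \<le> (\<Sum>j\<in>J. \<Sum>k\<in>J - {j}. sqrt ((\<Sum>i\<in>UNIV. (norm (v j i))^2) * (\<Sum>i\<in>UNIV. (norm (v k i))^2)))"
proof -
  have sq: "(norm (\<Sum>j\<in>J. v j i))^2 = (\<Sum>j\<in>J. (norm (v j i))^2 + (\<Sum>k\<in>J - {j}. inner (v j i) (v k i)))" for i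
  proof -
    have "(norm (\<Sum>j\<in>J. v j i))^2 = inner (\<Sum>j\<in>J. v j i) (\<Sum>k\<in>J. v k i)"
      by (simp add: power2_norm_eq_inner)
    also have "\<dots> = (\<Sum>j\<in>J. \<Sum>k\<in>J. inner (v j i) (v k i))"
      by (simp add: inner_sum_left inner_sum_right) (rule sum.swap)
    also have "\<dots> = (\<Sum>j\<in>J. inner (v j i) (v j i) + (\<Sum>k\<in>J - {j}. inner (v j i) (v k i)))"
      using J by (intro sum.cong refl) (simp add: sum.remove)
    finally show ?thesis by (simp add: power2_norm_eq_inner)
  qed
  have diff: "(\<Sum>i\<in>UNIV. (norm (\<Sum>j\<in>J. v j i))^2) - (\<Sum>j\<in>J. \<Sum>i\<in>UNIV. (norm (v j i))^2)
      = (\<Sum>j\<in>J. \<Sum>k\<in>J - {j}. \<Sum>i\<in>UNIV. inner (v j i) (v k i))"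
    unfolding sq sum.distrib
    by (simp add: sum.swap[of _ J UNIV] sum.swap[of _ "J - {_}" UNIV])
  have cs: "\<bar>\<Sum>i\<in>UNIV. inner (v j i) (v k i)\<bar> \<le> sqrt ((\<Sum>i\<in>UNIV. (norm (v j i))^2) * (\<Sum>i\<in>UNIV. (norm (v k i))^2))" for j k
  proof -
    have "\<bar>\<Sum>i\<in>UNIV. inner (v j i) (v k i)\<bar> \<le> (\<Sum>i\<in>UNIV. \<bar>inner (v j i) (v k i)\<bar>)" by (rule sum_abs)
    also have "\<dots> \<le> (\<Sum>i\<in>UNIV. \<bar>norm (v j i)\<bar> * \<bar>norm (v k i)\<bar>)"
      by (intro sum_mono) (simp add: Cauchy_Schwarz_ineq2)
    also have "\<dots> \<le> L2_set (\<lambda>i. norm (v j i)) UNIV * L2_set (\<lambda>i. norm (v k i)) UNIV"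
      by (rule L2_set_mult_ineq)
    also have "\<dots> = sqrt ((\<Sum>i\<in>UNIV. (norm (v j i))^2) * (\<Sum>i\<in>UNIV. (norm (v k i))^2))"
      by (simp add: L2_set_def real_sqrt_mult)
    finally show ?thesis .
  qed
  have "\<bar>\<Sum>j\<in>J. \<Sum>k\<in>J - {j}. \<Sum>i\<in>UNIV. inner (v j i) (v k i)\<bar> \<le> (\<Sum>j\<in>J. \<bar>\<Sum>k\<in>J - {j}. \<Sum>i\<in>UNIV. inner (v j i) (v k i)\<bar>)"
    by (rule sum_abs)
  also have "\<dots> \<le> (\<Sum>j\<in>J. \<Sum>k\<in>J - {j}. \<bar>\<Sum>i\<in>UNIV. inner (v j i) (v k i)\<bar>)"
    by (intro sum_mono sum_abs)
  also have "\<dots> \<le> (\<Sum>j\<in>J. \<Sum>k\<in>J - {j}. sqrt ((\<Sum>i\<in>UNIV. (norm (v j i))^2) * (\<Sum>i\<in>UNIV. (norm (v k i))^2)))"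
    by (intro sum_mono cs)
  finally show ?thesis unfolding diff .
qed

lemma harm_facts:
  assumes "harmonic_map w"
  shows "gprop (grad_sq w)" "\<And>i. continuous_on UNIV (pd i w)"
    "\<And>x. (w has_derivative frechet_derivative w (at x)) (at x)"
proof -
  show pc: "continuous_on UNIV (pd i w)" for i
    using assms unfolding harmonic_map_def
    by (intro continuous_at_imp_continuous_on ballI differentiable_imp_continuous_within) auto
  show "(w has_derivative frechet_derivative w (at x)) (at x)" for x
    using assms unfolding harmonic_map_def by (simp add: frechet_derivative_works)
  have "continuous_on UNIV (grad_sq w)"
    unfolding grad_sq_def[abs_def] by (intro continuous_intros pc)
  then show "gprop (grad_sq w)" using assms unfolding gprop_def harmonic_map_def
    by (auto simp: grad_sq_def intro: sum_nonneg)
qed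

lemma pd_F:
  fixes \<omega> :: "nat \<Rightarrow> real^2 \<Rightarrow> real^3" and \<mu> :: "nat \<Rightarrow> real" and b :: "nat \<Rightarrow> real^2"
  assumes J: "finite J" and D: "\<And>j x. j \<in> J \<Longrightarrow> (\<omega> j has_derivative frechet_derivative (\<omega> j) (at x)) (at x)"
    and mu: "\<And>j. j \<in> J \<Longrightarrow> \<mu> j > 0"
  shows "pd i (\<lambda>x. w0 + (\<Sum>j\<in>J. \<omega> j ((1 / \<mu> j) *\<^sub>R (x - b j)) - c j)) x
       = (\<Sum>j\<in>J. (1 / \<mu> j) *\<^sub>R pd i (\<omega> j) ((1 / \<mu> j) *\<^sub>R (x - b j)))"
proof -
  let ?D = "\<lambda>j. frechet_derivative (\<omega> j) (at ((1 / \<mu> j) *\<^sub>R (x - b j)))"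
  have inner: "((\<lambda>x. (1 / \<mu> j) *\<^sub>R (x - b j)) has_derivative (\<lambda>v. (1 / \<mu> j) *\<^sub>R v)) (at x)" for j
    by (auto intro!: derivative_eq_intros)
  have cj: "((\<lambda>x. \<omega> j ((1 / \<mu> j) *\<^sub>R (x - b j)) - c j) has_derivative (\<lambda>v. ?D j ((1 / \<mu> j) *\<^sub>R v))) (at x)"
    if "j \<in> J" for j
  proof -
    have "((\<lambda>x. \<omega> j ((1 / \<mu> j) *\<^sub>R (x - b j))) has_derivative (\<lambda>v. ?D j ((1 / \<mu> j) *\<^sub>R v))) (at x)"
      using has_derivative_compose[OF inner D[OF that]] by (simp add: o_def)
    from has_derivative_diff[OF this has_derivative_const[of "c j"]] show ?thesis by simp
  qed
  have "((\<lambda>x. w0 + (\<Sum>j\<in>J. \<omega> j ((1 / \<mu> j) *\<^sub>R (x - b j)) - c j)) has_derivative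
         (\<lambda>v. 0 + (\<Sum>j\<in>J. ?D j ((1 / \<mu> j) *\<^sub>R v)))) (at x)"
    by (intro has_derivative_add has_derivative_const has_derivative_sum cj)
  then have "frechet_derivative (\<lambda>x. w0 + (\<Sum>j\<in>J. \<omega> j ((1 / \<mu> j) *\<^sub>R (x - b j)) - c j)) (at x)
      = (\<lambda>v. 0 + (\<Sum>j\<in>J. ?D j ((1 / \<mu> j) *\<^sub>R v)))"
    by (rule frechet_derivative_at[symmetric])
  moreover have "?D j ((1 / \<mu> j) *\<^sub>R v) = (1 / \<mu> j) *\<^sub>R ?D j v" if "j \<in> J" for j v
    using has_derivative_linear[OF D[OF that]] by (rule linear_cmul)
  ultimately show ?thesis unfolding pd_def by simp
qed


lemma ball_to_full:
  fixes \<mu> \<rho> :: "nat \<Rightarrow> real" and b y :: "nat \<Rightarrow> real^2"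
  assumes G: "gprop G" and mu: "\<And>n. \<mu> n > 0"
    and s: "\<And>C. eventually (\<lambda>n. (\<rho> n - dist (y n) (b n)) / \<mu> n \<ge> C) sequentially"
  shows "(\<lambda>n. integral (ball (y n) (\<rho> n)) (hs G (\<mu> n) (b n))) \<longlonglongrightarrow> integral UNIV G"
proof -
  define c where "c n = (1 / \<mu> n) *\<^sub>R (y n - b n)" for n
  define r where "r n = \<rho> n / \<mu> n" for n
  have eq: "integral (ball (y n) (\<rho> n)) (hs G (\<mu> n) (b n)) = integral (ball (c n) (r n)) G" for n
  proof -
    have "{x. (1 / \<mu> n) *\<^sub>R (x - b n) \<in> ball (c n) (r n)} = ball (y n) (\<rho> n)"
      unfolding preimage_ball[OF mu[of n]] c_def r_def using mu[of n] by (simp add: algebra_simps)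
    then show ?thesis using hs_int[OF G mu[of n], of "ball (c n) (r n)" "b n"] by simp
  qed
  have X: "(\<lambda>n. integral UNIV G - integral (ball (c n) (r n)) G) \<longlonglongrightarrow> 0"
  proof (rule tendsto_small)
    fix n show "integral UNIV G - integral (ball (c n) (r n)) G \<ge> 0"
      using int_mono_sub[OF G, of "ball (c n) (r n)"] by simp
  next
    fix e :: real assume e: "e > 0"
    obtain R where R: "R > 0" "\<forall>S\<in>sets lebesgue. S \<inter> ball 0 R = {} \<longrightarrow> integral S G \<le> e"
      using tail[OF gpropD[OF G] e] by blast
    show "eventually (\<lambda>n. integral UNIV G - integral (ball (c n) (r n)) G \<le> e) sequentially"
      using s[of R]
    proof (rule eventually_mono)
      fix n assume sn: "R \<le> (\<rho> n - dist (y n) (b n)) / \<mu> n"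
      have "(\<rho> n - dist (y n) (b n)) / \<mu> n = r n - norm (c n)"
        using mu[of n] by (simp add: r_def c_def dist_norm diff_divide_distrib)
      then have Rr: "R \<le> r n - norm (c n)" using sn by simp
      have "(UNIV - ball (c n) (r n)) \<inter> ball 0 R = {}"
      proof (rule ccontr)
        assume "\<not> ?thesis"
        then obtain x where x: "dist (c n) x \<ge> r n" "norm x < R" by (auto simp: not_less)
        have "dist (c n) x \<le> norm (c n) + norm x" by (simp add: dist_norm norm_triangle_ineq4)
        then show False using x Rr by linarith
      qed
      then have "integral (UNIV - ball (c n) (r n)) G \<le> e" using R(2) by auto
      moreover have "integral (ball (c n) (r n)) G + integral (UNIV - ball (c n) (r n)) G = integral UNIV G"
        by (intro int_split gprop_int[OF G]) auto
      ultimately show "integral UNIV G - integral (ball (c n) (r n)) G \<le> e" by linarith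
    qed
  qed
  have "(\<lambda>n. integral UNIV G - (integral UNIV G - integral (ball (c n) (r n)) G)) \<longlonglongrightarrow> integral UNIV G - 0"
    by (intro tendsto_diff tendsto_const X)
  then show ?thesis unfolding eq by simp
qed

lemma sum_nonneg_tendsto_each:
  fixes f :: "nat \<Rightarrow> 'i \<Rightarrow> real"
  assumes "finite I" "\<And>n i. i \<in> I \<Longrightarrow> f n i \<ge> 0" "(\<lambda>n. \<Sum>i\<in>I. f n i) \<longlonglongrightarrow> 0" "i \<in> I"
  shows "(\<lambda>n. f n i) \<longlonglongrightarrow> 0"
proof (rule real_tendsto_sandwich[OF _ _ tendsto_const assms(3)])
  show "\<forall>\<^sub>F n in sequentially. 0 \<le> f n i" using assms(2,4) by simp
  show "\<forall>\<^sub>F n in sequentially. f n i \<le> (\<Sum>i\<in>I. f n i)"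
    using assms(1,2,4) by (intro always_eventually allI member_le_sum) auto
qed

lemma inverse_to_infty:
  fixes Q :: "nat \<Rightarrow> real"
  assumes "\<And>n. Q n > 0" "(\<lambda>n. inverse (Q n)) \<longlonglongrightarrow> 0"
  shows "eventually (\<lambda>n. Q n \<ge> C) sequentially"
proof (cases "C > 0")
  case True
  have "eventually (\<lambda>n. inverse (Q n) < inverse C) sequentially"
    using order_tendstoD(2)[OF assms(2)] True by simp
  then show ?thesis
  proof (rule eventually_mono)
    fix n assume "inverse (Q n) < inverse C"
    then show "C \<le> Q n" using True assms(1)[of n] by (simp add: inverse_less_iff_less)
  qed
next
  case False
  then show ?thesis using assms(1) by (intro always_eventually allI) (metis less_eq_real_def not_less order_trans)
qed

lemma infdist_ball:
  fixes y b :: "real^2"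
  assumes "\<rho> > 0" "b \<in> ball y \<rho>"
  shows "infdist b (frontier (ball y \<rho>)) \<le> \<rho> - dist y b" "infdist b (frontier (ball y \<rho>)) > 0"
proof -
  obtain u :: "real^2" where u: "norm u = 1"
    using vector_choose_size[of 1] by auto
  define p where "p = (if b = y then y + \<rho> *\<^sub>R u else y + (\<rho> / norm (b - y)) *\<^sub>R (b - y))"
  have fr: "frontier (ball y \<rho>) = sphere y \<rho>" using assms(1) by simp
  have "p \<in> sphere y \<rho> \<and> dist b p = \<rho> - dist y b"
  proof (cases "b = y")
    case True then show ?thesis using u assms(1) by (simp add: p_def dist_norm)
  next
    case False
    then have nz: "norm (b - y) > 0" by simp
    have "dist y p = \<rho>" using False nz assms(1) by (simp add: p_def dist_norm)
    moreover have "b - p = (1 - \<rho> / norm (b - y)) *\<^sub>R (b - y)"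
      using False by (simp add: p_def algebra_simps)
    then have "dist b p = \<bar>1 - \<rho> / norm (b - y)\<bar> * norm (b - y)" by (simp add: dist_norm)
    moreover have "norm (b - y) < \<rho>" using assms(2) by (simp add: dist_norm norm_minus_commute)
    then have "\<bar>1 - \<rho> / norm (b - y)\<bar> * norm (b - y) = \<rho> - norm (b - y)" using nz
      by (simp add: abs_if field_simps)
    ultimately show ?thesis by (simp add: dist_norm norm_minus_commute)
  qed
  then show "infdist b (frontier (ball y \<rho>)) \<le> \<rho> - dist y b"
    unfolding fr using infdist_le by metis
  show "infdist b (frontier (ball y \<rho>)) > 0"
    using assms by (intro infdist_pos_not_in_closed) (auto simp: fr)
qed


lemma gprop_sum:
  assumes "finite I" "\<And>i. i \<in> I \<Longrightarrow> gprop (f i)"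
  shows "gprop (\<lambda>x. \<Sum>i\<in>I. f i x)"
  unfolding gprop_def
proof (intro conjI allI)
  show "continuous_on UNIV (\<lambda>x. \<Sum>i\<in>I. f i x)"
    using assms by (intro continuous_on_sum) (auto dest: gpropD)
  show "0 \<le> (\<Sum>i\<in>I. f i x)" for x
    using assms by (intro sum_nonneg) (auto dest: gpropD)
  show "(\<lambda>x. \<Sum>i\<in>I. f i x) integrable_on UNIV"
    using assms by (intro integrable_sum) (auto dest: gpropD)
qed

lemma gprop_add:
  assumes "gprop f" "gprop g" shows "gprop (\<lambda>x. f x + g x)"
  using assms unfolding gprop_def by (auto intro: continuous_on_add integrable_add add_nonneg_nonneg)

theorem lemma2p5:
  fixes y :: "nat \<Rightarrow> real^2" and \<rho> :: "nat \<Rightarrow> real" and M :: nat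
    and \<omega>inf :: "real^3" and \<omega> :: "nat \<Rightarrow> (real^2 \<Rightarrow> real^3)"
    and b :: "nat \<Rightarrow> nat \<Rightarrow> real^2" and \<mu> :: "nat \<Rightarrow> nat \<Rightarrow> real"
  assumes rho_pos: "\<And>n. \<rho> n > 0"
    and winf_unit: "norm \<omega>inf = 1"
    and harm: "\<And>j. j \<in> {1..M} \<Longrightarrow> harmonic_map (\<omega> j)"
    and noncst: "\<And>j. j \<in> {1..M} \<Longrightarrow> \<not> (\<exists>c. \<forall>x. \<omega> j x = c)"
    and b_in: "\<And>n j. j \<in> {1..M} \<Longrightarrow> b n j \<in> ball (y n) (\<rho> n)"
    and mu_pos: "\<And>n j. j \<in> {1..M} \<Longrightarrow> \<mu> n j > 0"
    and lim: "(\<lambda>n. (\<Sum>j\<in>{1..M}. \<Sum>k\<in>{1..M} - {j}.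
                 inverse (\<mu> n j / \<mu> n k + \<mu> n k / \<mu> n j + norm (b n j - b n k) / \<mu> n j))
              + (\<Sum>j\<in>{1..M}. \<mu> n j / infdist (b n j) (frontier (ball (y n) (\<rho> n)))))
             \<longlonglongrightarrow> 0"
  shows "(\<lambda>n. energy (\<lambda>x. \<omega>inf + (\<Sum>j\<in>{1..M}.
                 \<omega> j ((1 / \<mu> n j) *\<^sub>R (x - b n j)) - value_at_infinity (\<omega> j)))
               (ball (y n) (\<rho> n)))
         \<longlonglongrightarrow> (\<Sum>j\<in>{1..M}. energy (\<omega> j) UNIV)"
proof -
  define J where "J = {1..M::nat}"
  have Jf: "finite J" by (simp add: J_def)
  define g where "g j = grad_sq (\<omega> j)" for j
  have gp: "\<And>j. j \<in> J \<Longrightarrow> gprop (g j)" using harm_facts(1)[OF harm] by (simp add: g_def J_def)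
  have Dw: "\<And>j x. j \<in> J \<Longrightarrow> (\<omega> j has_derivative frechet_derivative (\<omega> j) (at x)) (at x)"
    using harm_facts(3)[OF harm] by (simp add: J_def)
  have pdc: "\<And>j i. j \<in> J \<Longrightarrow> continuous_on UNIV (pd i (\<omega> j))"
    using harm_facts(2)[OF harm] by (simp add: J_def)
  have mu: "\<And>n j. j \<in> J \<Longrightarrow> \<mu> n j > 0" using mu_pos by (simp add: J_def)
  define F where "F n = (\<lambda>x. \<omega>inf + (\<Sum>j\<in>J. \<omega> j ((1 / \<mu> n j) *\<^sub>R (x - b n j)) - value_at_infinity (\<omega> j)))" for n
  define V where "V n j i x = (1 / \<mu> n j) *\<^sub>R pd i (\<omega> j) ((1 / \<mu> n j) *\<^sub>R (x - b n j))" for n j i x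
  define h where "h n j = hs (g j) (\<mu> n j) (b n j)" for n j
  define H where "H n x = (\<Sum>j\<in>J. h n j x)" for n x
  define P where "P n x = (\<Sum>j\<in>J. \<Sum>k\<in>J - {j}. sqrt (h n j x * h n k x))" for n x
  define D where "D n = ball (y n) (\<rho> n)" for n
  have pdF: "pd i (F n) x = (\<Sum>j\<in>J. V n j i x)" for n i x
    unfolding F_def V_def by (rule pd_F[OF Jf Dw mu])
  have gradF: "grad_sq (F n) = (\<lambda>x. \<Sum>i\<in>UNIV. (norm (\<Sum>j\<in>J. V n j i x))^2)" for n
    unfolding grad_sq_def[abs_def] pdF by simp
  have hsV: "(\<Sum>i\<in>UNIV. (norm (V n j i x))^2) = h n j x" for n j x
  proof -
    have "(\<Sum>i\<in>UNIV. (norm (V n j i x))^2) = (\<Sum>i\<in>UNIV. (1 / \<mu> n j)^2 * (norm (pd i (\<omega> j) ((1 / \<mu> n j) *\<^sub>R (x - b n j))))^2)"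
      unfolding V_def by (simp only: norm_scaleR power_mult_distrib power2_abs)
    also have "\<dots> = (1 / \<mu> n j)^2 * g j ((1 / \<mu> n j) *\<^sub>R (x - b n j))"
      unfolding g_def grad_sq_def by (simp add: sum_distrib_left)
    finally show ?thesis unfolding h_def hs_def by (simp add: field_simps)
  qed
  have hg: "\<And>n j. j \<in> J \<Longrightarrow> gprop (h n j)" unfolding h_def using hs_gprop gp mu by blast
  have Hg: "gprop (H n)" for n unfolding H_def by (rule gprop_sum[OF Jf hg])
  have Pg: "gprop (P n)" for n unfolding P_def
    by (intro gprop_sum Jf finite_Diff sqrt_gprop hg) auto
  have bound: "\<bar>grad_sq (F n) x - H n x\<bar> \<le> P n x" for n x
    using pw_bound[OF Jf, of "\<lambda>j i. V n j i x"] unfolding gradF H_def P_def hsV by simp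
  have Vc: "continuous_on UNIV (\<lambda>x. V n j i x)" if "j \<in> J" for n j i
    unfolding V_def using mu[OF that]
    by (intro continuous_intros continuous_on_compose2[OF pdc[OF that]]) auto
  have Fc: "continuous_on UNIV (grad_sq (F n))" for n
    unfolding gradF by (intro continuous_intros Vc) auto
  have Fint: "grad_sq (F n) integrable_on D n" for n
  proof (rule L_int[OF Fc])
    show "(\<lambda>x. H n x + P n x) integrable_on UNIV" using gprop_add[OF Hg Pg] by (auto dest: gpropD)
    show "\<bar>grad_sq (F n) x\<bar> \<le> H n x + P n x" for x
      using bound[of n x] gpropD(2)[OF Hg, of n x] by linarith
    show "D n \<in> sets lebesgue" by (simp add: D_def)
  qed
  have Dm: "D n \<in> sets lebesgue" for n by (simp add: D_def)
  have est: "\<bar>integral (D n) (grad_sq (F n)) - (\<Sum>j\<in>J. integral (D n) (h n j))\<bar> \<le> integral UNIV (P n)" for n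
  proof -
    have HD: "integral (D n) (H n) = (\<Sum>j\<in>J. integral (D n) (h n j))"
      unfolding H_def by (intro integral_sum Jf gprop_int[OF hg Dm])
    have "integral (D n) (grad_sq (F n)) - integral (D n) (H n) = integral (D n) (\<lambda>x. grad_sq (F n) x - H n x)"
      by (rule integral_diff[symmetric]) (intro Fint gprop_int[OF Hg Dm])+
    also have "\<bar>\<dots>\<bar> \<le> integral (D n) (P n)"
      using integral_norm_bound_integral[of "\<lambda>x. grad_sq (F n) x - H n x" "D n" "P n"]
        Fint gprop_int[OF Hg Dm] gprop_int[OF Pg Dm] bound by (auto intro: integrable_diff)
    also have "\<dots> \<le> integral UNIV (P n)" by (rule int_mono_sub[OF Pg Dm])
    finally show ?thesis unfolding HD .
  qed
  define Q where "Q n j k = \<mu> n j / \<mu> n k + \<mu> n k / \<mu> n j + norm (b n j - b n k) / \<mu> n j" for n j k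
  have Qpos: "Q n j k > 0" if "j \<in> J" "k \<in> J" for n j k
    using mu[OF that(1), of n] mu[OF that(2), of n] unfolding Q_def
    by (intro add_pos_nonneg) auto
  define S1 where "S1 n = (\<Sum>j\<in>J. \<Sum>k\<in>J - {j}. inverse (Q n j k))" for n
  define S2 where "S2 n = (\<Sum>j\<in>J. \<mu> n j / infdist (b n j) (frontier (ball (y n) (\<rho> n))))" for n
  have inn: "0 \<le> (\<Sum>k\<in>J - {j}. inverse (Q n j k))" if "j \<in> J" for n j
    using Qpos that by (intro sum_nonneg) (auto intro: less_imp_le)
  have S1n: "S1 n \<ge> 0" for n unfolding S1_def by (rule sum_nonneg) (rule inn)
  have S2t: "0 \<le> \<mu> n j / infdist (b n j) (frontier (ball (y n) (\<rho> n)))" if "j \<in> J" for n j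
    using mu[OF that, of n] infdist_nonneg by (intro divide_nonneg_nonneg) (auto intro: less_imp_le)
  have S2n: "S2 n \<ge> 0" for n unfolding S2_def by (rule sum_nonneg) (rule S2t)
  have lim': "(\<lambda>n. S1 n + S2 n) \<longlonglongrightarrow> 0" using lim unfolding S1_def S2_def Q_def J_def .
  have S1l: "S1 \<longlonglongrightarrow> 0"
    by (rule real_tendsto_sandwich[OF _ _ tendsto_const lim']) (use S1n S2n in auto)
  have S2l: "S2 \<longlonglongrightarrow> 0"
    by (rule real_tendsto_sandwich[OF _ _ tendsto_const lim']) (use S1n S2n in auto)
  have Qinf: "eventually (\<lambda>n. Q n j k \<ge> C) sequentially" if "j \<in> J" "k \<in> J - {j}" for j k C
  proof (rule inverse_to_infty)
    show "Q n j k > 0" for n using Qpos that by auto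
    have "(\<lambda>n. \<Sum>k\<in>J - {j}. inverse (Q n j k)) \<longlonglongrightarrow> 0"
      by (rule sum_nonneg_tendsto_each[OF Jf inn S1l[unfolded S1_def] that(1)])
    then show "(\<lambda>n. inverse (Q n j k)) \<longlonglongrightarrow> 0"
    proof (rule sum_nonneg_tendsto_each[rotated 2])
      show "finite (J - {j})" using Jf by simp
      show "k \<in> J - {j}" using that(2) .
      show "0 \<le> inverse (Q n j i)" if "i \<in> J - {j}" for n i
        using Qpos[of j i n] that \<open>j \<in> J\<close> by (auto intro: less_imp_le)
    qed
  qed
  have sinf: "eventually (\<lambda>n. (\<rho> n - dist (y n) (b n j)) / \<mu> n j \<ge> C) sequentially" if "j \<in> J" for j C
  proof -
    define idd where "idd n = infdist (b n j) (frontier (ball (y n) (\<rho> n)))" for n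
    have idp: "idd n > 0" and idle: "idd n \<le> \<rho> n - dist (y n) (b n j)" for n
      using infdist_ball[OF rho_pos b_in] that unfolding idd_def J_def by auto
    have "(\<lambda>n. \<mu> n j / idd n) \<longlonglongrightarrow> 0"
      using sum_nonneg_tendsto_each[OF Jf _ S2l[unfolded S2_def] that] S2t unfolding idd_def by auto
    then have "eventually (\<lambda>n. idd n / \<mu> n j \<ge> C) sequentially"
      using mu[OF that] idp by (intro inverse_to_infty) auto
    then show ?thesis
    proof (rule eventually_mono)
      fix n assume "C \<le> idd n / \<mu> n j"
      also have "idd n / \<mu> n j \<le> (\<rho> n - dist (y n) (b n j)) / \<mu> n j"
        using idle[of n] mu[OF that, of n] by (intro divide_right_mono) auto
      finally show "C \<le> (\<rho> n - dist (y n) (b n j)) / \<mu> n j" .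
    qed
  qed
  have Zeq: "integral UNIV (P n) = (\<Sum>j\<in>J. \<Sum>k\<in>J - {j}. integral UNIV (\<lambda>x. sqrt (h n j x * h n k x)))" for n
  proof -
    have "integral UNIV (P n) = (\<Sum>j\<in>J. integral UNIV (\<lambda>x. \<Sum>k\<in>J - {j}. sqrt (h n j x * h n k x)))"
      unfolding P_def by (intro integral_sum Jf gpropD(3) gprop_sum finite_Diff sqrt_gprop hg) auto
    also have "\<dots> = (\<Sum>j\<in>J. \<Sum>k\<in>J - {j}. integral UNIV (\<lambda>x. sqrt (h n j x * h n k x)))"
      by (intro sum.cong refl integral_sum finite_Diff Jf gpropD(3) sqrt_gprop hg) auto
    finally show ?thesis .
  qed
  have Zl: "(\<lambda>n. integral UNIV (P n)) \<longlonglongrightarrow> 0"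
    unfolding Zeq
  proof (intro tendsto_null_sum)
    fix j k assume jk: "j \<in> J" "k \<in> J - {j}"
    show "(\<lambda>n. integral UNIV (\<lambda>x. sqrt (h n j x * h n k x))) \<longlonglongrightarrow> 0"
      unfolding h_def
      using cross_to_zero[OF gp[OF jk(1)] gp, of k "\<lambda>n. \<mu> n j" "\<lambda>n. \<mu> n k" "\<lambda>n. b n j" "\<lambda>n. b n k"]
        jk mu Qinf[OF jk] unfolding Q_def by auto
  qed
  have Al: "(\<lambda>n. \<Sum>j\<in>J. integral (D n) (h n j)) \<longlonglongrightarrow> (\<Sum>j\<in>J. integral UNIV (g j))"
  proof (intro tendsto_sum)
    fix j assume j: "j \<in> J"
    show "(\<lambda>n. integral (D n) (h n j)) \<longlonglongrightarrow> integral UNIV (g j)"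
      unfolding D_def h_def using ball_to_full[OF gp[OF j], of "\<lambda>n. \<mu> n j" \<rho> y "\<lambda>n. b n j"] mu[OF j] sinf[OF j] by auto
  qed
  have diffl: "(\<lambda>n. integral (D n) (grad_sq (F n)) - (\<Sum>j\<in>J. integral (D n) (h n j))) \<longlonglongrightarrow> 0"
    by (rule Lim_null_comparison[OF always_eventually Zl]) (use est in auto)
  have "(\<lambda>n. (integral (D n) (grad_sq (F n)) - (\<Sum>j\<in>J. integral (D n) (h n j))) + (\<Sum>j\<in>J. integral (D n) (h n j)))
      \<longlonglongrightarrow> 0 + (\<Sum>j\<in>J. integral UNIV (g j))"
    by (rule tendsto_add[OF diffl Al])
  then have "(\<lambda>n. (1/2) * integral (D n) (grad_sq (F n))) \<longlonglongrightarrow> (1/2) * (\<Sum>j\<in>J. integral UNIV (g j))"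
    by (intro tendsto_mult_left) simp
  then show ?thesis
    unfolding energy_def D_def F_def J_def g_def by (simp add: sum_distrib_left)
qed

end
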